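(* Let $u$ be a 5-complex number with $\rho_1>0$ (so $\theta_+\in(0,\pi)$ and $\psi_1\in(0,\pi/2]$). Then $$u=d\left(\frac52\right)^{1/2}\left(\cot^2\theta_++1+\cot^2\psi_1\right)^{-1/2}\left(\sqrt2\,e_+\cot\theta_++e_1+e_2\cot\psi_1\right)\exp\left(\tilde e_1\phi_1+\tilde e_2\phi_2\right),$$ where $\exp w=\sum_{n\ge0}w^n/n!$.
   Context: A 5-complex number is $u=x_0+h_1x_1+h_2x_2+h_3x_3+h_4x_4$ with real $x_j$, with componentwise addition and the commutative associative bilinear multiplication determined by $h_jh_k=h_{(j+k)\bmod 5}$, $h_0=1$. Modulus $d=(\sum_jx_j^2)^{1/2}$. Canonical variables: $v_+=\sum_jx_j$ and, for $k=1,2$, $v_k=\sum_jx_j\cos(2\pi kj/5)$, $\tilde v_k=\sum_jx_j\sin(2\pi kj/5)$. For $k=1,2$: $\rho_k=(v_k^2+\tilde v_k^2)^{1/2}$, $\phi_k\in[0,2\pi)$ with $\cos\phi_k=v_k/\rho_k$, $\sin\phi_k=\tilde v_k/\rho_k$. Planar angle $\psi_1\in[0,\pi/2]$: $\tan\psi_1=\rho_1/\rho_2$. Polar angle $\theta_+\in[0,\pi]$: $\tan\theta_+=\sqrt2\rho_1/v_+$. Canonical basis (with $h_0=1$): $e_+=\frac15\sum_{j=0}^4h_j$, and for $k=1,2$: $e_k=\frac25\sum_{j=0}^4\cos(2\pi kj/5)h_j$, $\tilde e_k=\frac25\sum_{j=0}^4\sin(2\pi kj/5)h_j$. Here $\cot$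 denotes $1/\tan$, with $\cot(\pi/2)=0$. *)

theory Defs
  imports "HOL-Analysis.Analysis"
begin

text \<open>5-complex numbers: u = x0 + h1 x1 + ... + h4 x4 represented as vectors in real^5,
  component j (j<5) being u $ of_nat j; the index type 5 has arithmetic mod 5.\<close>

type_synonym tc5 = "real ^ 5"

definition xc :: "tc5 \<Rightarrow> nat \<Rightarrow> real" where
  "xc u j = u $ (of_nat j :: 5)"

definition hb :: "nat \<Rightarrow> tc5" where
  "hb j = axis (of_nat j :: 5) 1"

definition mult5 :: "tc5 \<Rightarrow> tc5 \<Rightarrow> tc5" where
  "mult5 u w = (\<Sum>j<5. \<Sum>l<5. (xc u j * xc w l) *\<^sub>R hb (j + l))"

fun pow5 :: "tc5 \<Rightarrow> nat \<Rightarrow> tc5" where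
  "pow5 w 0 = hb 0"
| "pow5 w (Suc n) = mult5 w (pow5 w n)"

definition exp5 :: "tc5 \<Rightarrow> tc5" where
  "exp5 w = (\<Sum>n. (1 / fact n) *\<^sub>R pow5 w n)"

definition modulus5 :: "tc5 \<Rightarrow> real" where
  "modulus5 u = sqrt (\<Sum>j<5. (xc u j)^2)"

definition vplus :: "tc5 \<Rightarrow> real" where
  "vplus u = (\<Sum>j<5. xc u j)"

definition vk :: "nat \<Rightarrow> tc5 \<Rightarrow> real" where
  "vk k u = (\<Sum>j<5. xc u j * cos (2 * pi * real k * real j / 5))"

definition vtk :: "nat \<Rightarrow> tc5 \<Rightarrow> real" where
  "vtk k u = (\<Sum>j<5. xc u j * sin (2 * pi * real k * real j / 5))"

definition rhok :: "nat \<Rightarrow> tc5 \<Rightarrow> real" where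
  "rhok k u = sqrt ((vk k u)^2 + (vtk k u)^2)"

definition phik :: "nat \<Rightarrow> tc5 \<Rightarrow> real" where
  "phik k u = (SOME \<phi>. 0 \<le> \<phi> \<and> \<phi> < 2 * pi \<and>
      cos \<phi> = vk k u / rhok k u \<and> sin \<phi> = vtk k u / rhok k u)"

definition psi1 :: "tc5 \<Rightarrow> real" where
  "psi1 u = (if rhok 2 u = 0 then pi / 2 else arctan (rhok 1 u / rhok 2 u))"

definition thetap :: "tc5 \<Rightarrow> real" where
  "thetap u = (if vplus u > 0 then arctan (sqrt 2 * rhok 1 u / vplus u)
               else if vplus u = 0 then pi / 2
               else pi + arctan (sqrt 2 * rhok 1 u / vplus u))"

definition eplus :: tc5 where
  "eplus = (1/5) *\<^sub>R (\<Sum>j<5. hb j)"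

definition ek :: "nat \<Rightarrow> tc5" where
  "ek k = (2/5) *\<^sub>R (\<Sum>j<5. cos (2 * pi * real k * real j / 5) *\<^sub>R hb j)"

definition etk :: "nat \<Rightarrow> tc5" where
  "etk k = (2/5) *\<^sub>R (\<Sum>j<5. sin (2 * pi * real k * real j / 5) *\<^sub>R hb j)"

end

theory Submission
  imports Defs
begin
lemma RA5: "Rep_bit1 (Abs_bit1 (x mod 5) :: 5) = x mod 5"
  by (rule bit1.Abs_inverse) auto
lemma idx_eq: "((of_nat j :: 5) = of_nat m) \<longleftrightarrow> j mod 5 = m mod 5"
proof -
  have "((of_nat j :: 5) = of_nat m) \<longleftrightarrow> Rep_bit1 (of_nat j :: 5) = Rep_bit1 (of_nat m :: 5)"
    by (simp add: bit1.Rep_inject_sym)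
  also have "\<dots> \<longleftrightarrow> int j mod 5 = int m mod 5"
    by (simp add: bit1.of_nat_eq RA5)
  also have "\<dots> \<longleftrightarrow> int (j mod 5) = int (m mod 5)" by (simp only: zmod_int of_nat_numeral)
  also have "\<dots> \<longleftrightarrow> j mod 5 = m mod 5" by (rule of_nat_eq_iff)
  finally show ?thesis .
qed
lemma idx_surj: "\<exists>j<5. i = (of_nat j :: 5)"
proof (cases i rule: bit1_cases)
  case (of_int z)
  then have "i = of_nat (nat z)" by simp
  moreover have "nat z < 5" using of_int by simp
  ultimately show ?thesis by blast
qed

lemma xc_add: "xc (a + b) j = xc a j + xc b j" by (simp add: xc_def)
lemma xc_scale: "xc (c *\<^sub>R a) j = c * xc a j" by (simp add: xc_def)
lemma xc_sum: "xc (sum f S) j = (\<Sum>i\<in>S. xc (f i) j)" by (simp add: xc_def)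
lemma xc_hb: "xc (hb m) j = (if j mod 5 = m mod 5 then 1 else 0)"
  by (simp add: xc_def hb_def axis_def idx_eq)
lemma xc_ext: assumes "\<And>j. j < 5 \<Longrightarrow> xc a j = xc b j" shows "a = b"
proof (subst vec_eq_iff, intro allI)
  fix i :: 5
  obtain j where "j < 5" "i = of_nat j" using idx_surj by blast
  then show "a $ i = b $ i" using assms[of j] by (simp add: xc_def)
qed

definition w5 :: complex where "w5 = cis (2*pi/5)"
lemma w5_pow: "w5 ^ n = cis (2*pi*real n/5)"
  unfolding w5_def Complex.DeMoivre by (simp add: algebra_simps)
lemma w5_5: "w5 ^ 5 = 1"
  by (simp add: w5_pow)
lemma w5_mod: "w5 ^ n = w5 ^ (n mod 5)"
proof -
  have "w5 ^ n = w5 ^ (5 * (n div 5) + n mod 5)" by simp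
  also have "\<dots> = w5 ^ (n mod 5)" by (simp only: power_add power_mult w5_5) simp
  finally show ?thesis .
qed
lemma w5_cnj: "w5 ^ n * cnj (w5 ^ n) = 1"
  by (simp add: w5_pow cis_cnj cis_mult)

lemma orth: assumes "l < 5" "j < 5"
  shows "(\<Sum>k<5. (w5 ^ l * cnj (w5 ^ j)) ^ k) = (if l = j then 5 else 0)"
proof (cases "l = j")
  case True
  have "w5 ^ l * cnj (w5 ^ j) = 1" using True w5_cnj by blast
  then show ?thesis using True by simp
next
  case False
  define z where "z = w5 ^ l * cnj (w5 ^ j)"
  have z: "z = cis (2*pi*(real l - real j)/5)"
    by (simp add: z_def w5_pow cis_cnj cis_mult algebra_simps diff_divide_distrib)
  have z5: "z ^ 5 = 1"
  proof -
    have e: "real 5 * (2*pi*(real l - real j)/5) = 2*pi*(real_of_int (int l - int j))"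
      by simp
    have "z ^ 5 = cis (2*pi*(real_of_int (int l - int j)))"
      by (simp only: z Complex.DeMoivre e)
    also have "\<dots> = 1" by (rule cis_multiple_2pi) simp
    finally show ?thesis .
  qed
  have z1: "z \<noteq> 1"
  proof
    assume "z = 1"
    then have "cos (2*pi*(real l - real j)/5) = 1" using z
      by (metis cis.sel(1) one_complex.sel(1))
    then obtain n :: int where n: "2*pi*(real l - real j)/5 = real_of_int n * 2 * pi"
      using cos_one_2pi_int by blast
    then have "2*pi*(real l - real j) = 2*pi*(5 * real_of_int n)" by (simp add: field_simps)
    then have "real l - real j = 5 * real_of_int n"
      by (rule mult_left_cancel[THEN iffD1, rotated]) simp
    then have "int l - int j = 5 * n" by linarith
    then show False using assms False by presburger
  qed
  have "(\<Sum>k<5. z^k) = 0" using z5 z1 by (simp add: sum_gp_strict)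
  then show ?thesis using False unfolding z_def by simp
qed
definition F :: "nat \<Rightarrow> tc5 \<Rightarrow> complex" where
  "F k u = (\<Sum>j<5. of_real (xc u j) * w5 ^ (k * j))"

lemma F_add: "F k (a + b) = F k a + F k b"
  by (simp add: F_def xc_add distrib_right sum.distrib)
lemma F_scale: "F k (c *\<^sub>R a) = of_real c * F k a"
  by (simp add: F_def xc_scale sum_distrib_left mult.assoc)
lemma F_sum: "F k (sum f S) = (\<Sum>i\<in>S. F k (f i))"
  unfolding F_def xc_sum of_real_sum sum_distrib_right by (rule sum.swap)
lemma F_hb: "F k (hb m) = w5 ^ (k * m)"
proof -
  have "F k (hb m) = (\<Sum>j<5. if j = m mod 5 then w5 ^ (k * j) else 0)"
    unfolding F_def by (rule sum.cong) (auto simp: xc_hb)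
  also have "\<dots> = w5 ^ (k * (m mod 5))" by (simp add: sum.delta)
  also have "\<dots> = w5 ^ (k * m)" by (metis w5_mod mod_mult_right_eq)
  finally show ?thesis .
qed
lemma F_mult: "F k (mult5 u w) = F k u * F k w"
proof -
  have "F k (mult5 u w) = (\<Sum>j<5. \<Sum>l<5. (of_real (xc u j) * w5 ^ (k * j)) * (of_real (xc w l) * w5 ^ (k * l)))"
    unfolding mult5_def F_sum F_scale F_hb
    by (simp add: distrib_left power_add mult_ac)
  also have "\<dots> = F k u * F k w" unfolding F_def by (simp add: sum_product)
  finally show ?thesis .
qed
lemma F_pow: "F k (pow5 w n) = F k w ^ n"
  by (induct n) (simp_all add: F_hb F_mult)

lemma F_linear: "bounded_linear (F k)"
proof -
  have "linear (F k)"
  proof (rule linearI)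
    fix c :: real and x :: tc5
    show "F k (c *\<^sub>R x) = c *\<^sub>R F k x" by (subst F_scale) (simp add: scaleR_conv_of_real)
  qed (simp add: F_add)
  then show ?thesis by (simp add: linear_conv_bounded_linear)
qed

lemma inv_formula: assumes "j < 5"
  shows "(\<Sum>k<5. F k v * cnj (w5 ^ (k * j))) = of_real (5 * xc v j)"
proof -
  have "(\<Sum>k<5. F k v * cnj (w5 ^ (k * j))) = (\<Sum>k<5. \<Sum>l<5. of_real (xc v l) * (w5 ^ l * cnj (w5 ^ j)) ^ k)"
    unfolding F_def sum_distrib_right
    by (intro sum.cong refl) (simp add: power_mult_distrib mult_ac flip: power_mult)
  also have "\<dots> = (\<Sum>l<5. of_real (xc v l) * (\<Sum>k<5. (w5 ^ l * cnj (w5 ^ j)) ^ k))"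
    by (subst sum.swap) (simp add: sum_distrib_left)
  also have "\<dots> = (\<Sum>l<5. of_real (xc v l) * (if l = j then 5 else 0))"
    apply (intro sum.cong refl)
    subgoal for l using assms by (subst orth) auto
    done
  also have "\<dots> = (\<Sum>l<5. if l = j then 5 * of_real (xc v l) else 0)"
    by (intro sum.cong refl) auto
  also have "\<dots> = of_real (5 * xc v j)" using assms by simp
  finally show ?thesis .
qed

lemma F_inj: assumes "\<And>k. k < 5 \<Longrightarrow> F k a = F k b" shows "a = b"
proof (rule xc_ext)
  fix j :: nat assume j: "j < 5"
  have "of_real (5 * xc a j) = (of_real (5 * xc b j) :: complex)"
  proof -
    have "(\<Sum>k<5. F k a * cnj (w5 ^ (k * j))) = (\<Sum>k<5. F k b * cnj (w5 ^ (k * j)))"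
      by (intro sum.cong refl) (simp add: assms)
    then show ?thesis by (simp only: inv_formula[OF j])
  qed
  then show "xc a j = xc b j" by simp
qed
lemma vec_rep: "v = (\<Sum>j<5. xc v j *\<^sub>R hb j)"
proof (rule xc_ext)
  fix m :: nat assume m: "m < 5"
  have "xc (\<Sum>j<5. xc v j *\<^sub>R hb j) m = (\<Sum>j<5. if j = m then xc v j else 0)"
    unfolding xc_sum xc_scale xc_hb using m by (intro sum.cong refl) auto
  also have "\<dots> = xc v m" using m by simp
  finally show "xc v m = xc (\<Sum>j<5. xc v j *\<^sub>R hb j) m" by simp
qed

lemma vec_rep2: "v = (\<Sum>j<5. (Re (\<Sum>k<5. F k v * cnj (w5 ^ (k * j))) / 5) *\<^sub>R hb j)"
proof -
  have "(\<Sum>j<5. (Re (\<Sum>k<5. F k v * cnj (w5 ^ (k * j))) / 5) *\<^sub>R hb j) = (\<Sum>j<5. xc v j *\<^sub>R hb j)"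
    apply (intro sum.cong refl)
    subgoal for j by (subst inv_formula) auto
    done
  then show ?thesis using vec_rep by simp
qed

lemma F_exp: "F k (exp5 w) = exp (F k w)"
proof -
  define s where "s n = (1 / fact n) *\<^sub>R pow5 w n" for n
  have Fs: "F k' (s n) = F k' w ^ n /\<^sub>R fact n" for k' n
    unfolding s_def F_scale F_pow by (simp add: scaleR_conv_of_real divide_inverse)
  have eq: "(\<lambda>n. \<Sum>j<5. (Re (\<Sum>k<5. F k (s n) * cnj (w5 ^ (k * j))) / 5) *\<^sub>R hb j) = s"
    by (rule ext, rule vec_rep2[symmetric])
  have "(\<lambda>n. \<Sum>j<5. (Re (\<Sum>k<5. F k (s n) * cnj (w5 ^ (k * j))) / 5) *\<^sub>R hb j) sums
        (\<Sum>j<5. (Re (\<Sum>k<5. exp (F k w) * cnj (w5 ^ (k * j))) / 5) *\<^sub>R hb j)"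
    unfolding Fs
    by (intro sums_sum sums_scaleR_left sums_divide sums_Re sums_mult2 exp_converges)
  then have "s sums (\<Sum>j<5. (Re (\<Sum>k<5. exp (F k w) * cnj (w5 ^ (k * j))) / 5) *\<^sub>R hb j)"
    unfolding eq .
  then have "summable s" by (rule sums_summable)
  then have "(\<lambda>n. F k (s n)) sums F k (exp5 w)"
    unfolding exp5_def s_def[symmetric]
    by (intro bounded_linear.sums[OF F_linear] summable_sums)
  moreover have "(\<lambda>n. F k (s n)) sums exp (F k w)" unfolding Fs by (rule exp_converges)
  ultimately show ?thesis by (rule sums_unique2)
qed
lemma pw: "(w5 ^ a * cnj (w5 ^ b)) ^ j = cis (2*pi*(real a - real b)*real j/5)"
  unfolding w5_pow cis_cnj cis_mult Complex.DeMoivre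
  by (rule arg_cong[where f=cis]) (simp add: field_simps)

lemma cos_as_cis: "complex_of_real (cos x) = (cis x + cis (-x)) / 2"
  by (simp add: complex_eq_iff)
lemma sin_as_cis: "complex_of_real (sin x) = (cis x - cis (-x)) / (2 * \<i>)"
proof -
  have "cis x - cis (-x) = 2 * \<i> * of_real (sin x)" by (simp add: complex_eq_iff)
  then show ?thesis by simp
qed

lemma orth': assumes "l < 5" "j < 5"
  shows "(\<Sum>k<5. cis (2*pi*(real l - real j)*real k/5)) = (if l = j then 5 else 0)"
  using orth[OF assms] unfolding pw .

lemma F_cos: assumes "k + m < 5" "0 < m"
  shows "F k (\<Sum>j<5. cos (2 * pi * real m * real j / 5) *\<^sub>R hb j) = (if k = m then 5/2 else 0)"
proof -
  have t: "of_real (cos (2 * pi * real m * real j / 5)) * w5 ^ (k * j) =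
     (cis (2*pi*(real (m+k) - real 0)*real j/5) + cis (2*pi*(real k - real m)*real j/5)) / 2" for j
  proof -
    have a1: "2*pi*real m*real j/5 + 2*pi*real (k*j)/5 = 2*pi*(real (m+k) - real 0)*real j/5"
      by (simp add: field_simps)
    have a2: "-(2*pi*real m*real j/5) + 2*pi*real (k*j)/5 = 2*pi*(real k - real m)*real j/5"
      by (simp add: field_simps)
    show ?thesis
      by (simp only: w5_pow cos_as_cis times_divide_eq_left distrib_right cis_mult a1 a2)
  qed
  have "F k (\<Sum>j<5. cos (2 * pi * real m * real j / 5) *\<^sub>R hb j) =
     ((\<Sum>j<5. cis (2*pi*(real (m+k) - real 0)*real j/5)) + (\<Sum>j<5. cis (2*pi*(real k - real m)*real j/5))) / 2"
    unfolding F_sum F_scale F_hb t by (simp only: sum_divide_distrib sum.distrib[symmetric])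
  also have "\<dots> = (if k = m then 5/2 else 0)"
    using assms by (simp only: orth') auto
  finally show ?thesis .
qed

lemma F_sin: assumes "k + m < 5" "0 < m"
  shows "F k (\<Sum>j<5. sin (2 * pi * real m * real j / 5) *\<^sub>R hb j) = (if k = m then 5/2 * \<i> else 0)"
proof -
  have t: "of_real (sin (2 * pi * real m * real j / 5)) * w5 ^ (k * j) =
     (cis (2*pi*(real (m+k) - real 0)*real j/5) - cis (2*pi*(real k - real m)*real j/5)) / (2 * \<i>)" for j
  proof -
    have a1: "2*pi*real m*real j/5 + 2*pi*real (k*j)/5 = 2*pi*(real (m+k) - real 0)*real j/5"
      by (simp add: field_simps)
    have a2: "-(2*pi*real m*real j/5) + 2*pi*real (k*j)/5 = 2*pi*(real k - real m)*real j/5"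
      by (simp add: field_simps)
    show ?thesis
      by (simp only: w5_pow sin_as_cis times_divide_eq_left left_diff_distrib cis_mult a1 a2)
  qed
  have "F k (\<Sum>j<5. sin (2 * pi * real m * real j / 5) *\<^sub>R hb j) =
     ((\<Sum>j<5. cis (2*pi*(real (m+k) - real 0)*real j/5)) - (\<Sum>j<5. cis (2*pi*(real k - real m)*real j/5))) / (2 * \<i>)"
    unfolding F_sum F_scale F_hb t by (simp only: sum_divide_distrib sum_subtractf[symmetric])
  also have "\<dots> = (if k = m then 5/2 * \<i> else 0)"
    using assms by (simp only: orth') (auto simp: field_simps)
  finally show ?thesis .
qed

lemma F_ek: assumes "k + m < 5" "0 < m" shows "F k (ek m) = (if k = m then 1 else 0)"
  unfolding ek_def F_scale F_cos[OF assms] by simp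
lemma F_etk: assumes "k + m < 5" "0 < m" shows "F k (etk m) = (if k = m then \<i> else 0)"
  unfolding etk_def F_scale F_sin[OF assms] by simp
lemma F_eplus: assumes "k < 5" shows "F k eplus = (if k = 0 then 1 else 0)"
proof -
  have "F k eplus = of_real (1/5) * (\<Sum>j<5. cis (2*pi*(real k - real 0)*real j/5))"
    unfolding eplus_def F_scale F_sum F_hb
    by (simp add: w5_pow mult_ac)
  also have "\<dots> = (if k = 0 then 1 else 0)" using assms by (simp only: orth') auto
  finally show ?thesis .
qed
lemma F_vk: "F k u = Complex (vk k u) (vtk k u)"
  by (simp add: F_def vk_def vtk_def w5_pow complex_eq_iff Re_sum Im_sum mult_ac)

lemma F_cnj: assumes "k \<le> 5" shows "F (5 - k) v = cnj (F k v)"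
proof -
  have e: "w5 ^ ((5 - k) * j) = cnj (w5 ^ (k * j))" for j
  proof -
    have "w5 ^ ((5 - k) * j) * w5 ^ (k * j) = w5 ^ (5 * j)"
      using assms by (simp flip: power_add add_mult_distrib)
    also have "\<dots> = 1" by (simp add: power_mult w5_5)
    also have "\<dots> = cnj (w5 ^ (k * j)) * w5 ^ (k * j)" using w5_cnj[of "k*j"] by (simp add: mult.commute)
    finally have "w5 ^ ((5 - k) * j) * w5 ^ (k * j) = cnj (w5 ^ (k * j)) * w5 ^ (k * j)" .
    moreover have "w5 ^ (k * j) \<noteq> 0" by (metis mult_zero_left zero_neq_one w5_cnj)
    ultimately show ?thesis by (metis mult_right_cancel)
  qed
  show ?thesis unfolding F_def e by simp
qed

lemma F_inj3: assumes "F 0 a = F 0 b" "F 1 a = F 1 b" "F 2 a = F 2 b" shows "a = b"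
proof (rule F_inj)
  fix k :: nat assume k: "k < 5"
  have 3: "F 3 a = F 3 b" using F_cnj[of 2 a] F_cnj[of 2 b] assms by simp
  have 4: "F 4 a = F 4 b" using F_cnj[of 1 a] F_cnj[of 1 b] assms by simp
  from k have "k = 0 \<or> k = 1 \<or> k = 2 \<or> k = 3 \<or> k = 4" by linarith
  then show "F k a = F k b" using assms 3 4 by auto
qed

lemma sum5: "(\<Sum>k<(5::nat). f k) = f 0 + f 1 + f 2 + f 3 + (f 4 :: 'a::comm_monoid_add)"
  by (simp add: eval_nat_numeral add_ac)

lemma phik_spec: assumes "rhok k u > 0"
  shows "of_real (rhok k u) * cis (phik k u) = F k u"
proof -
  define a where "a = vk k u / rhok k u"
  define b where "b = vtk k u / rhok k u"
  have r2: "(rhok k u)^2 = (vk k u)^2 + (vtk k u)^2"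
    unfolding rhok_def by simp
  have "a^2 + b^2 = ((vk k u)^2 + (vtk k u)^2) / (rhok k u)^2"
    by (simp add: a_def b_def power_divide add_divide_distrib)
  also have "\<dots> = 1" using assms by (simp flip: r2)
  finally have "a^2 + b^2 = 1" .
  then obtain t where "0 \<le> t" "t < 2*pi" "a = cos t" "b = sin t" by (rule sincos_total_2pi)
  then have "\<exists>t. 0 \<le> t \<and> t < 2*pi \<and> cos t = a \<and> sin t = b" by auto
  then have "cos (phik k u) = a \<and> sin (phik k u) = b"
    unfolding phik_def a_def b_def by (rule someI2_ex) auto
  then show ?thesis using assms by (simp add: F_vk complex_eq_iff a_def b_def)
qed

lemma rho0: assumes "rhok k u = 0" shows "F k u = 0"
proof -
  have "(vk k u)^2 + (vtk k u)^2 = 0" using assms unfolding rhok_def by simp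
  then have "vk k u = 0" "vtk k u = 0" by (auto simp: add_nonneg_eq_0_iff)
  then show ?thesis by (simp add: F_vk complex_eq_iff)
qed

lemma F_norm2: "F k u * cnj (F k u) = of_real ((rhok k u)^2)"
  by (simp add: F_vk rhok_def complex_eq_iff power2_eq_square)

lemma F0: "F 0 u = of_real (vplus u)"
  by (simp add: F_vk vk_def vtk_def vplus_def complex_eq_iff)

lemma parseval: "(\<Sum>k<5. F k u * cnj (F k u)) = of_real (5 * (\<Sum>j<5. (xc u j)^2))"
proof -
  have "(\<Sum>k<5. F k u * cnj (F k u)) = (\<Sum>k<5. \<Sum>j<5. of_real (xc u j) * (F k u * cnj (w5 ^ (k * j))))"
    unfolding F_def[of _ u] by (simp add: sum_distrib_left sum_distrib_right mult_ac)
  also have "\<dots> = (\<Sum>j<5. of_real (xc u j) * (\<Sum>k<5. F k u * cnj (w5 ^ (k * j))))"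
    by (subst sum.swap) (simp add: sum_distrib_left)
  also have "\<dots> = (\<Sum>j<5. of_real (xc u j) * of_real (5 * xc u j))"
    apply (intro sum.cong refl)
    subgoal for j by (subst inv_formula) auto
    done
  also have "\<dots> = of_real (5 * (\<Sum>j<5. (xc u j)^2))"
    by (simp add: sum_distrib_left power2_eq_square mult_ac)
  finally show ?thesis .
qed

lemma cot_eq: "cot x = 1 / tan x" by (simp add: cot_def tan_def)
lemma rhok_nonneg: "rhok k u \<ge> 0" by (simp add: rhok_def)

lemma cot_theta: assumes "rhok 1 u > 0"
  shows "cot (thetap u) = vplus u / (sqrt 2 * rhok 1 u)"
proof -
  consider "vplus u > 0" | "vplus u = 0" | "vplus u < 0" by linarith
  then show ?thesis
  proof cases
    case 1 then show ?thesis by (simp add: thetap_def cot_eq tan_arctan)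
  next
    case 2 then show ?thesis by (simp add: thetap_def cot_def)
  next
    case 3
    have "tan (pi + arctan (sqrt 2 * rhok 1 u / vplus u)) = sqrt 2 * rhok 1 u / vplus u"
      using tan_periodic_pi[of "arctan (sqrt 2 * rhok 1 u / vplus u)"] by (simp add: add.commute tan_arctan)
    then show ?thesis using 3 by (simp add: thetap_def cot_eq tan_arctan)
  qed
qed

lemma cot_psi: assumes "rhok 1 u > 0"
  shows "cot (psi1 u) = rhok 2 u / rhok 1 u"
proof (cases "rhok 2 u = 0")
  case True then show ?thesis by (simp add: psi1_def cot_def)
next
  case False then show ?thesis by (simp add: psi1_def cot_eq tan_arctan)
qed

theorem mainTheorem7:
  fixes u :: tc5
  assumes "rhok 1 u > 0"
  shows "u = (modulus5 u * sqrt (5/2) / sqrt ((cot (thetap u))^2 + 1 + (cot (psi1 u))^2)) *\<^sub>R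
             mult5 ((sqrt 2 * cot (thetap u)) *\<^sub>R eplus + ek 1 + cot (psi1 u) *\<^sub>R ek 2)
                   (exp5 (phik 1 u *\<^sub>R etk 1 + phik 2 u *\<^sub>R etk 2))"
proof -
  define v0 where "v0 = vplus u"
  define r1 where "r1 = rhok 1 u"
  define r2 where "r2 = rhok 2 u"
  define d where "d = modulus5 u"
  have r1: "r1 > 0" using assms by (simp add: r1_def)
  have r2: "r2 \<ge> 0" by (simp add: r2_def rhok_nonneg)
  have S0: "0 \<le> (\<Sum>j<5. (xc u j)^2)" by (rule sum_nonneg) simp
  then have d0: "d \<ge> 0" by (simp add: d_def modulus5_def)
  from S0 have dsq: "d^2 = (\<Sum>j<5. (xc u j)^2)"
    unfolding d_def modulus5_def by simp
  have "(\<Sum>k<5. F k u * cnj (F k u)) = of_real (v0^2 + 2 * r1^2 + 2 * r2^2)"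
    unfolding sum5 using F_cnj[of 2 u] F_cnj[of 1 u]
    by (simp add: F_norm2 F0 v0_def r1_def r2_def mult.commute power2_eq_square)
  then have pars: "5 * d^2 = v0^2 + 2 * r1^2 + 2 * r2^2"
    unfolding parseval dsq by (simp only: of_real_eq_iff)
  have dpos: "d > 0"
  proof -
    have "r1^2 > 0" "v0^2 \<ge> 0" "r2^2 \<ge> 0" using r1 by simp_all
    then have "5 * d^2 > 0" using pars by linarith
    then show ?thesis using d0 by (cases "d = 0") auto
  qed
  have cT: "cot (thetap u) = v0 / (sqrt 2 * r1)" using cot_theta[OF assms] by (simp add: v0_def r1_def)
  have cP: "cot (psi1 u) = r2 / r1" using cot_psi[OF assms] by (simp add: r2_def r1_def)
  have S: "(cot (thetap u))^2 + 1 + (cot (psi1 u))^2 = (sqrt (5/2) * d / r1)^2"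
  proof -
    have "(cot (thetap u))^2 + 1 + (cot (psi1 u))^2 = (v0^2 + 2 * r1^2 + 2 * r2^2) / (2 * r1^2)"
      using r1 by (simp add: cT cP power_divide power_mult_distrib field_simps)
    also have "\<dots> = (sqrt (5/2) * d / r1)^2"
      unfolding pars[symmetric] using r1 by (simp add: power_divide power_mult_distrib)
    finally show ?thesis .
  qed
  have c: "modulus5 u * sqrt (5/2) / sqrt ((cot (thetap u))^2 + 1 + (cot (psi1 u))^2) = r1"
    unfolding S real_sqrt_abs using dpos r1 by (simp add: d_def[symmetric])
  define P where "P = sqrt 2 * cot (thetap u)"
  define Q where "Q = cot (psi1 u)"
  define A where "A = P *\<^sub>R eplus + ek 1 + Q *\<^sub>R ek 2"
  define W where "W = phik 1 u *\<^sub>R etk 1 + phik 2 u *\<^sub>R etk 2"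
  have FR: "F k (r1 *\<^sub>R mult5 A (exp5 W)) = of_real r1 * (F k A * exp (F k W))" for k
    by (simp add: F_scale F_mult F_exp)
  have FA: "F k A = of_real P * F k eplus + F k (ek 1) + of_real Q * F k (ek 2)" for k
    by (simp add: A_def F_add F_scale)
  have FW: "F k W = of_real (phik 1 u) * F k (etk 1) + of_real (phik 2 u) * F k (etk 2)" for k
    by (simp add: W_def F_add F_scale)
  have "u = r1 *\<^sub>R mult5 A (exp5 W)"
  proof (rule F_inj3)
    have "F 0 u = of_real v0" by (simp add: F0 v0_def)
    then show "F 0 u = F 0 (r1 *\<^sub>R mult5 A (exp5 W))"
      unfolding FR FA FW using r1
      by (simp add: F_ek F_etk F_eplus P_def cT)
  next
    have "F 1 u = of_real r1 * cis (phik 1 u)" using phik_spec[OF assms] by (simp add: r1_def)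
    then show "F 1 u = F 1 (r1 *\<^sub>R mult5 A (exp5 W))"
      unfolding FR FA FW
      by (simp add: F_ek F_etk F_eplus cis_conv_exp mult.commute)
  next
    have "F 2 u = of_real r1 * (of_real Q * cis (phik 2 u))"
    proof (cases "r2 = 0")
      case True
      then show ?thesis using rho0[of 2 u] by (simp add: r2_def Q_def cP)
    next
      case False
      then have "r2 > 0" using r2 by simp
      then have "F 2 u = of_real r2 * cis (phik 2 u)" using phik_spec[of 2 u] by (simp add: r2_def)
      then show ?thesis using r1 by (simp add: Q_def cP)
    qed
    then show "F 2 u = F 2 (r1 *\<^sub>R mult5 A (exp5 W))"
      unfolding FR FA FW
      by (simp add: F_ek F_etk F_eplus cis_conv_exp mult.commute)
  qed
  then show ?thesis unfolding c A_def W_def P_def Q_def .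
qed
end
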